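(* Let $C$ be a nonempty finite set of group indices, where each group $i\in C$ has $N_i$ users (a positive integer) with utility $\theta_i\ln(1+s)$, the $\theta_i>0$ being distinct with $\theta_i>\theta_{i'}$ whenever $i<i'$, and let $s^C>0$ be an amount of resource. Consider the single-price problem restricted to $C$: maximize $p\sum_{i\in C}n_is_i$ over $p>0$ and $n_i\in\{0,\dots,N_i\}$, subject to $s_i=(\theta_i/p-1)^+$ for $i\in C$ and $\sum_{i\in C}n_is_i\le s^C$. For $c\in C$ let $p_C(c)=\frac{\sum_{i\in C,i\le c}N_i\theta_i}{s^C+\sum_{i\in C,i\le c}N_i}$, let $K=\max\{c\in C:\theta_c>p_C(c)\}$, and set $N^C=\sum_{i\in C,i\le K}N_i$, $\theta^C=\frac{1}{N^C}\sum_{i\in C,i\le K}N_i\theta_i$. Then the optimal value of this problem equals $\frac{s^C N^C\theta^C}{s^C+N^C}$, which is the optimal single-price revenue, with resource $s^C$, of a single group consisting of $N^C$ users each with utility $\theta^C\ln(1+s)$.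
   Context: A user with utility $\theta\ln(1+s)$ facing unit price $p$ demands $(\theta/p-1)^+$, where $(x)^+=\max(x,0)$. *)

theory Defs
  imports Complex_Main
begin

text \<open>Demand of a user with utility theta * ln(1+s) at unit price p: (theta/p - 1)^+.\<close>
definition demand :: "real \<Rightarrow> real \<Rightarrow> real" where
  "demand \<theta> p = max (\<theta> / p - 1) 0"

definition sp_feasible ::
  "nat set \<Rightarrow> (nat \<Rightarrow> nat) \<Rightarrow> (nat \<Rightarrow> real) \<Rightarrow> real \<Rightarrow> real \<Rightarrow> (nat \<Rightarrow> nat) \<Rightarrow> bool" where
  "sp_feasible C N \<theta> S p n \<longleftrightarrow>
     p > 0 \<and> (\<forall>i\<in>C. n i \<le> N i) \<and> (\<Sum>i\<in>C. real (n i) * demand (\<theta> i) p) \<le> S"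

definition sp_revenue :: "nat set \<Rightarrow> (nat \<Rightarrow> real) \<Rightarrow> real \<Rightarrow> (nat \<Rightarrow> nat) \<Rightarrow> real" where
  "sp_revenue C \<theta> p n = p * (\<Sum>i\<in>C. real (n i) * demand (\<theta> i) p)"

definition sp_opt_value ::
  "nat set \<Rightarrow> (nat \<Rightarrow> nat) \<Rightarrow> (nat \<Rightarrow> real) \<Rightarrow> real \<Rightarrow> real \<Rightarrow> bool" where
  "sp_opt_value C N \<theta> S v \<longleftrightarrow>
     (\<exists>p n. sp_feasible C N \<theta> S p n \<and> sp_revenue C \<theta> p n = v) \<and>
     (\<forall>p n. sp_feasible C N \<theta> S p n \<longrightarrow> sp_revenue C \<theta> p n \<le> v)"

definition pC :: "nat set \<Rightarrow> (nat \<Rightarrow> nat) \<Rightarrow> (nat \<Rightarrow> real) \<Rightarrow> real \<Rightarrow> nat \<Rightarrow> real" where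
  "pC C N \<theta> S c = (\<Sum>i\<in>{i\<in>C. i \<le> c}. real (N i) * \<theta> i) / (S + (\<Sum>i\<in>{i\<in>C. i \<le> c}. real (N i)))"

end

theory Submission
  imports Defs
begin

lemma gen:
  fixes C D :: "nat set" and N :: "nat \<Rightarrow> nat" and \<theta> :: "nat \<Rightarrow> real" and S P :: real
  assumes fin: "finite C" and DC: "D \<subseteq> C" and S: "S > 0" and P: "P > 0"
    and inD: "\<forall>i\<in>D. \<theta> i > P" and outD: "\<forall>i\<in>C-D. \<theta> i \<le> P"
    and Pdef: "P = (\<Sum>i\<in>D. real (N i) * \<theta> i) / (S + (\<Sum>i\<in>D. real (N i)))"
  shows "sp_opt_value C N \<theta> S (S * P)"
proof -
  define A where "A = (\<Sum>i\<in>D. real (N i) * \<theta> i)"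
  define B where "B = (\<Sum>i\<in>D. real (N i))"
  have finD: "finite D" using fin DC finite_subset by blast
  have B0: "B \<ge> 0" unfolding B_def by (simp add: sum_nonneg)
  have SB: "S + B > 0" using S B0 by linarith
  have PA: "P * (S + B) = A" using Pdef SB unfolding A_def B_def by simp
  have pd: "\<And>t p. p > 0 \<Longrightarrow> p * demand t p = max (t - p) 0"
    unfolding demand_def by (auto simp: max_def field_simps)
  have s1: "(\<Sum>i\<in>C. real (N i) * demand (\<theta> i) P) = (\<Sum>i\<in>D. real (N i) * demand (\<theta> i) P)"
  proof (rule sum.mono_neutral_right[OF fin DC])
    show "\<forall>i\<in>C - D. real (N i) * demand (\<theta> i) P = 0"
      using outD P by (auto simp: demand_def max_def field_simps)
  qed
  have "P * (\<Sum>i\<in>D. real (N i) * demand (\<theta> i) P) = (\<Sum>i\<in>D. real (N i) * (\<theta> i - P))"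
    unfolding sum_distrib_left
    by (rule sum.cong) (use inD P pd in \<open>auto simp: max_def\<close>)
  also have "\<dots> = A - P * B" unfolding A_def B_def
    by (simp add: right_diff_distrib sum_subtractf sum_distrib_left mult.commute mult.left_commute)
  also have "\<dots> = P * S" using PA by (simp add: algebra_simps)
  finally have s2: "(\<Sum>i\<in>C. real (N i) * demand (\<theta> i) P) = S" using s1 P by simp
  have feas: "sp_feasible C N \<theta> S P N" unfolding sp_feasible_def using P s2 by simp
  have rev: "sp_revenue C \<theta> P N = S * P" unfolding sp_revenue_def using s2 by simp
  have g: "(\<Sum>i\<in>C. real (N i) * max (\<theta> i - P) 0) = P * S"
  proof -
    have "(\<Sum>i\<in>C. real (N i) * max (\<theta> i - P) 0) = (\<Sum>i\<in>C. real (N i) * (P * demand (\<theta> i) P))"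
      using pd[OF P] by simp
    also have "\<dots> = P * (\<Sum>i\<in>C. real (N i) * demand (\<theta> i) P)"
      by (simp add: sum_distrib_left mult.commute mult.left_commute)
    finally show ?thesis using s2 by simp
  qed
  have ub: "sp_revenue C \<theta> p n \<le> S * P" if f: "sp_feasible C N \<theta> S p n" for p n
  proof -
    from f have p: "p > 0" and nN: "\<forall>i\<in>C. n i \<le> N i"
      and sS: "(\<Sum>i\<in>C. real (n i) * demand (\<theta> i) p) \<le> S"
      unfolding sp_feasible_def by auto
    show ?thesis
    proof (cases "p \<le> P")
      case True
      have "sp_revenue C \<theta> p n \<le> p * S" unfolding sp_revenue_def
        using sS p by (simp add: mult_left_mono)
      also have "\<dots> \<le> P * S" using True S by (simp add: mult_right_mono)
      finally show ?thesis by (simp add: mult.commute)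
    next
      case False
      have "sp_revenue C \<theta> p n = (\<Sum>i\<in>C. real (n i) * max (\<theta> i - p) 0)"
        unfolding sp_revenue_def sum_distrib_left
        by (rule sum.cong) (use pd[OF p] in \<open>auto simp: mult.left_commute\<close>)
      also have "\<dots> \<le> (\<Sum>i\<in>C. real (N i) * max (\<theta> i - P) 0)"
      proof (rule sum_mono)
        fix i assume i: "i \<in> C"
        have "real (n i) \<le> real (N i)" using nN i by simp
        moreover have "max (\<theta> i - p) 0 \<le> max (\<theta> i - P) 0" using False by auto
        ultimately show "real (n i) * max (\<theta> i - p) 0 \<le> real (N i) * max (\<theta> i - P) 0"
          by (simp add: mult_mono)
      qed
      finally show ?thesis using g by (simp add: mult.commute)
    qed
  qed
  show ?thesis unfolding sp_opt_value_def using feas rev ub by blast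
qed

theorem lemma1:
  fixes C :: "nat set" and N :: "nat \<Rightarrow> nat" and \<theta> :: "nat \<Rightarrow> real" and S :: real
  assumes "finite C" and "C \<noteq> {}"
    and "\<forall>i\<in>C. N i > 0"
    and "\<forall>i\<in>C. \<theta> i > 0"
    and "\<forall>i\<in>C. \<forall>i'\<in>C. i < i' \<longrightarrow> \<theta> i > \<theta> i'"
    and "S > 0"
  shows "let K = Max {c\<in>C. \<theta> c > pC C N \<theta> S c};
             NC = (\<Sum>i\<in>{i\<in>C. i \<le> K}. N i);
             \<theta>C = (1 / real NC) * (\<Sum>i\<in>{i\<in>C. i \<le> K}. real (N i) * \<theta> i)
         in sp_opt_value C N \<theta> S (S * real NC * \<theta>C / (S + real NC))
          \<and> sp_opt_value {0} (\<lambda>_. NC) (\<lambda>_. \<theta>C) S (S * real NC * \<theta>C / (S + real NC))"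
proof -
  note fin = assms(1) and ne = assms(2) and Npos = assms(3) and tpos = assms(4)
    and mono = assms(5) and S = assms(6)
  define T where "T = {c\<in>C. \<theta> c > pC C N \<theta> S c}"
  define K where "K = Max T"
  define D where "D = {i\<in>C. i \<le> K}"
  define A where "A = (\<Sum>i\<in>D. real (N i) * \<theta> i)"
  define B where "B = (\<Sum>i\<in>D. real (N i))"
  define P where "P = A / (S + B)"
  have finT: "finite T" using fin unfolding T_def by simp
  define m where "m = Min C"
  have mC: "m \<in> C" using fin ne unfolding m_def by simp
  have mset: "{i\<in>C. i \<le> m} = {m}" using fin mC unfolding m_def
    by (auto intro: antisym)
  have "m \<in> T"
  proof -
    have Nm: "real (N m) > 0" using Npos mC by simp
    have tm: "\<theta> m > 0" using tpos mC by simp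
    have "pC C N \<theta> S m = real (N m) * \<theta> m / (S + real (N m))"
      unfolding pC_def mset by simp
    also have "\<dots> < \<theta> m" using Nm tm S by (simp add: field_simps)
    finally show ?thesis unfolding T_def using mC by simp
  qed
  hence Tne: "T \<noteq> {}" by auto
  have KT: "K \<in> T" unfolding K_def using finT Tne by simp
  have KC: "K \<in> C" using KT unfolding T_def by simp
  have finD: "finite D" using fin unfolding D_def by simp
  have KD: "K \<in> D" using KC unfolding D_def by simp
  have B0: "B > 0" unfolding B_def
    using finD KD Npos D_def by (intro sum_pos2[of D K]) auto
  have tK: "\<theta> K > P" using KT unfolding T_def P_def A_def B_def pC_def D_def by simp
  have inD: "\<forall>i\<in>D. \<theta> i > P"
  proof
    fix i assume i: "i \<in> D"
    show "\<theta> i > P"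
    proof (cases "i = K")
      case False
      then have "i < K" "i \<in> C" using i unfolding D_def by auto
      then have "\<theta> i > \<theta> K" using mono KC by auto
      then show ?thesis using tK by simp
    qed (use tK in simp)
  qed
  have outD: "\<forall>i\<in>C-D. \<theta> i \<le> P"
  proof
    fix i assume i: "i \<in> C - D"
    then have iK: "i > K" and iC: "i \<in> C" unfolding D_def by auto
    define G where "G = {j\<in>C. j > K}"
    define c where "c = Min G"
    have finG: "finite G" using fin unfolding G_def by simp
    have iG: "i \<in> G" using iK iC unfolding G_def by simp
    have cG: "c \<in> G" unfolding c_def using finG iG by (intro Min_in) auto
    have ci: "c \<le> i" unfolding c_def using finG iG by simp
    have cC: "c \<in> C" and cK: "c > K" using cG unfolding G_def by auto
    have cT: "c \<notin> T" using cK finT K_def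
      by (metis Max_ge leD)
    have tc: "\<theta> c \<le> pC C N \<theta> S c" using cT cC unfolding T_def by auto
    have cset: "{j\<in>C. j \<le> c} = insert c D"
    proof -
      have "j \<le> K" if "j \<in> C" "j \<le> c" "j \<noteq> c" for j
      proof (rule ccontr)
        assume "\<not> j \<le> K"
        then have "j \<in> G" using that unfolding G_def by simp
        then have "c \<le> j" unfolding c_def using finG by simp
        then show False using that by simp
      qed
      then show ?thesis using cC cK unfolding D_def by auto
    qed
    have cnD: "c \<notin> D" using cK unfolding D_def by simp
    have pc: "pC C N \<theta> S c = (A + real (N c) * \<theta> c) / (S + (B + real (N c)))"
      unfolding pC_def cset A_def B_def using finD cnD by (simp add: add.commute)
    have pos: "S + (B + real (N c)) > 0" using S B0 by simp
    have "\<theta> c * (S + (B + real (N c))) \<le> A + real (N c) * \<theta> c"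
      using tc pc pos by (simp add: pos_le_divide_eq)
    then have "\<theta> c * (S + B) \<le> A" by (simp add: algebra_simps)
    then have tcP: "\<theta> c \<le> P" unfolding P_def using S B0 by (simp add: pos_le_divide_eq)
    show "\<theta> i \<le> P"
    proof (cases "c = i")
      case False
      then have "\<theta> c > \<theta> i" using ci mono cC iC by auto
      then show ?thesis using tcP by simp
    qed (use tcP in simp)
  qed
  have P0: "P > 0"
  proof -
    have "A > 0" unfolding A_def
      using finD KD Npos tpos D_def by (intro sum_pos2[of D K]) auto
    then show ?thesis unfolding P_def using S B0 by simp
  qed
  have NC: "real (\<Sum>i\<in>D. N i) = B" unfolding B_def by simp
  have val: "S * B * ((1 / B) * A) / (S + B) = S * P"
    unfolding P_def using B0 by (simp add: field_simps)
  have part1: "sp_opt_value C N \<theta> S (S * P)"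
    using gen[OF fin _ S P0 inD outD] unfolding P_def A_def B_def D_def by auto
  have A0: "A > 0"
    unfolding A_def using finD KD Npos tpos D_def by (intro sum_pos2[of D K]) auto
  have part2: "sp_opt_value {0} (\<lambda>_. \<Sum>i\<in>D. N i) (\<lambda>_. (1 / B) * A) S (S * P)"
  proof (rule gen[of "{0}" "{0}"])
    show "\<forall>i\<in>{0}. P < (1 / B) * A" unfolding P_def using A0 B0 S
      by (simp add: divide_strict_left_mono field_simps)
    show "P = (\<Sum>i\<in>{0}. real (\<Sum>i\<in>D. N i) * ((1 / B) * A)) / (S + (\<Sum>i\<in>{0}. real (\<Sum>i\<in>D. N i)))"
      unfolding NC P_def using B0 by simp
  qed (use S P0 in auto)
  show ?thesis
    unfolding Let_def T_def[symmetric] K_def[symmetric] D_def[symmetric]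
      A_def[symmetric] NC val using part1 part2 by simp
qed

end
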